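(* Let $A$ be a positive operator on a real or complex Hilbert space which has a projection decomposition. Then either $A$ is a self-adjoint projection or $\|A\|>1$.
   Context: A positive operator $A$ has a projection decomposition if $A$ can be written as the sum of a finite or infinite sequence of (not necessarily mutually orthogonal) self-adjoint projections, with the series converging in the strong operator topology. *)

theory Defs
  imports "HOL-Analysis.Analysis"
begin

definition self_adjoint :: "('a::real_inner \<Rightarrow> 'a) \<Rightarrow> bool" where
  "self_adjoint T \<longleftrightarrow> (\<forall>x y. inner (T x) y = inner x (T y))"

definition sa_projection :: "('a::real_inner \<Rightarrow> 'a) \<Rightarrow> bool" where
  "sa_projection P \<longleftrightarrow> bounded_linear P \<and> P \<circ> P = P \<and> self_adjoint P"

definition positive_op :: "('a::real_inner \<Rightarrow> 'a) \<Rightarrow> bool" where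
  "positive_op A \<longleftrightarrow> bounded_linear A \<and> self_adjoint A \<and> (\<forall>x. 0 \<le> inner (A x) x)"

text \<open>A is the sum of a finite or infinite sequence of operators satisfying isP,
the series converging in the strong operator topology.\<close>
definition decomposition_by :: "(('a::real_normed_vector \<Rightarrow> 'a) \<Rightarrow> bool) \<Rightarrow> ('a \<Rightarrow> 'a) \<Rightarrow> bool" where
  "decomposition_by isP A \<longleftrightarrow>
     (\<exists>P :: nat \<Rightarrow> 'a \<Rightarrow> 'a. (\<forall>n. isP (P n)) \<and>
        ((\<exists>N. \<forall>x. A x = (\<Sum>n<N. P n x)) \<or> (\<forall>x. (\<lambda>n. P n x) sums (A x))))"

definition has_projection_decomposition :: "('a::real_inner \<Rightarrow> 'a) \<Rightarrow> bool" where
  "has_projection_decomposition A \<longleftrightarrow> decomposition_by sa_projection A"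

text \<open>Complex Hilbert spaces, modelled as their realification: a real Hilbert space
with a complex structure J (multiplication by i), an orthogonal map with J o J = -id.
The complex inner product is recovered as below (linear in the first argument).\<close>
definition complex_structure :: "('a::real_inner \<Rightarrow> 'a) \<Rightarrow> bool" where
  "complex_structure J \<longleftrightarrow> bounded_linear J \<and> (\<forall>x. J (J x) = - x) \<and>
     (\<forall>x y. inner (J x) (J y) = inner x y)"

definition cinner :: "('a::real_inner \<Rightarrow> 'a) \<Rightarrow> 'a \<Rightarrow> 'a \<Rightarrow> complex" where
  "cinner J x y = Complex (inner x y) (inner x (J y))"

definition clinear_op :: "('a::real_inner \<Rightarrow> 'a) \<Rightarrow> ('a \<Rightarrow> 'a) \<Rightarrow> bool" where
  "clinear_op J T \<longleftrightarrow> bounded_linear T \<and> (\<forall>x. T (J x) = J (T x))"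

definition c_sa_projection :: "('a::real_inner \<Rightarrow> 'a) \<Rightarrow> ('a \<Rightarrow> 'a) \<Rightarrow> bool" where
  "c_sa_projection J P \<longleftrightarrow> clinear_op J P \<and> P \<circ> P = P \<and>
     (\<forall>x y. cinner J (P x) y = cinner J x (P y))"

definition c_positive_op :: "('a::real_inner \<Rightarrow> 'a) \<Rightarrow> ('a \<Rightarrow> 'a) \<Rightarrow> bool" where
  "c_positive_op J A \<longleftrightarrow> clinear_op J A \<and>
     (\<forall>x. Im (cinner J (A x) x) = 0 \<and> 0 \<le> Re (cinner J (A x) x))"

definition c_has_projection_decomposition :: "('a::real_inner \<Rightarrow> 'a) \<Rightarrow> ('a \<Rightarrow> 'a) \<Rightarrow> bool" where
  "c_has_projection_decomposition J A \<longleftrightarrow> decomposition_by (c_sa_projection J) A"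

end

theory Submission
  imports Defs
begin

lemma sa_proj_inner:
  assumes "sa_projection P"
  shows "inner (P x) x = inner (P x) (P x)"
proof -
  have "P (P x) = P x" using assms unfolding sa_projection_def by (metis comp_apply)
  hence "inner (P x) x = inner (P (P x)) x" by simp
  also have "\<dots> = inner (P x) (P x)" using assms unfolding sa_projection_def self_adjoint_def by blast
  finally show ?thesis .
qed

lemma to_sums:
  assumes "decomposition_by isP A" and "isP (\<lambda>x. 0)"
  shows "\<exists>P. (\<forall>n. isP (P n)) \<and> (\<forall>x. (\<lambda>n. P n x) sums (A x))"
proof -
  obtain P where P: "\<forall>n. isP (P n)"
    and D: "(\<exists>N. \<forall>x. A x = (\<Sum>n<N. P n x)) \<or> (\<forall>x. (\<lambda>n. P n x) sums (A x))"
    using assms(1) unfolding decomposition_by_def by blast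
  show ?thesis
  proof (cases "\<forall>x. (\<lambda>n. P n x) sums (A x)")
    case True then show ?thesis using P by blast
  next
    case False
    then obtain N where N: "\<forall>x. A x = (\<Sum>n<N. P n x)" using D by blast
    define Q where "Q = (\<lambda>n. if n < N then P n else (\<lambda>x. 0))"
    have "\<forall>n. isP (Q n)" using P assms(2) by (simp add: Q_def)
    moreover have "(\<lambda>n. Q n x) sums (A x)" for x
    proof -
      have "(\<lambda>n. Q n x) sums (\<Sum>n<N. Q n x)"
        by (rule sums_finite) (auto simp: Q_def)
      moreover have "(\<Sum>n<N. Q n x) = A x" using N by (simp add: Q_def)
      ultimately show ?thesis by simp
    qed
    ultimately show ?thesis by blast
  qed
qed

lemma main:
  fixes A :: "'a::real_inner \<Rightarrow> 'a"
  assumes P: "\<And>n. sa_projection (P n)"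
    and S: "\<And>x. (\<lambda>n. P n x) sums (A x)"
    and bl: "bounded_linear A" and no: "onorm A \<le> 1"
  shows "A \<circ> A = A \<and> self_adjoint A"
proof -
  have ortho: "P n x = 0" if m: "P m x = x" and nm: "n \<noteq> m" for m n x
  proof -
    let ?a = "\<lambda>k. inner (P k x) x"
    have a_nn: "?a k \<ge> 0" for k using sa_proj_inner[OF P] by simp
    have sa: "?a sums inner (A x) x"
      using bounded_linear.sums[OF bounded_linear_inner_left S] by simp
    have "inner (A x) x \<le> norm (A x) * norm x" by (rule norm_cauchy_schwarz)
    also have "\<dots> \<le> onorm A * norm x * norm x"
      using onorm[OF bl, of x] by (simp add: mult_right_mono)
    also have "\<dots> = onorm A * (norm x * norm x)" by simp
    also have "\<dots> \<le> 1 * (norm x * norm x)" using no by (intro mult_right_mono) auto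
    also have "\<dots> = norm x * norm x" by simp
    finally have le: "inner (A x) x \<le> norm x * norm x" .
    let ?K = "Suc (max m n)"
    have "(\<Sum>k\<in>{m,n}. ?a k) \<le> (\<Sum>k<?K. ?a k)"
      by (rule sum_mono2) (auto simp: a_nn)
    also have "\<dots> \<le> suminf ?a"
      using sa a_nn by (intro sum_le_suminf) (auto simp: sums_iff)
    also have "\<dots> = inner (A x) x" using sa by (simp add: sums_iff)
    finally have "?a m + ?a n \<le> norm x * norm x" using le nm by simp
    moreover have "?a m = norm x * norm x" using m by (simp add: dot_square_norm power2_eq_square)
    ultimately have "?a n \<le> 0" by simp
    hence "inner (P n x) (P n x) \<le> 0" using sa_proj_inner[OF P] by simp
    thus ?thesis by (metis inner_gt_zero_iff not_le)
  qed
  have AP: "A (P m y) = P m y" for m y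
  proof -
    have idem: "P m (P m y) = P m y" using P[of m] unfolding sa_projection_def by (metis comp_apply)
    have "(\<lambda>n. P n (P m y)) = (\<lambda>n. if n = m then P n (P m y) else 0)"
      using ortho[OF idem] by auto
    hence "(\<lambda>n. P n (P m y)) sums P m (P m y)" using sums_single by metis
    thus ?thesis using S[of "P m y"] idem sums_unique2 by metis
  qed
  have "A (A x) = A x" for x
  proof -
    have "(\<lambda>n. A (P n x)) sums A (A x)" using bounded_linear.sums[OF bl S] .
    hence "(\<lambda>n. P n x) sums A (A x)" using AP by simp
    thus ?thesis using S[of x] sums_unique2 by metis
  qed
  moreover have "inner (A x) y = inner x (A y)" for x y
  proof -
    have "(\<lambda>n. inner (P n x) y) sums inner (A x) y"
      using bounded_linear.sums[OF bounded_linear_inner_left S] by simp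
    moreover have "(\<lambda>n. inner x (P n y)) sums inner x (A y)"
      using bounded_linear.sums[OF bounded_linear_inner_right S] by simp
    moreover have "inner (P n x) y = inner x (P n y)" for n
      using P[of n] unfolding sa_projection_def self_adjoint_def by blast
    ultimately show ?thesis using sums_unique2 by fastforce
  qed
  ultimately show ?thesis unfolding self_adjoint_def by auto
qed

lemma zero_sa: "sa_projection (\<lambda>x::'a::real_inner. 0)"
  unfolding sa_projection_def self_adjoint_def by (auto simp: bounded_linear_zero)

lemma zero_csa: "bounded_linear J \<Longrightarrow> c_sa_projection J (\<lambda>x::'a::real_inner. 0)"
  using linear_simps(3)[of J] unfolding c_sa_projection_def clinear_op_def cinner_def by (auto simp: bounded_linear_zero)

lemma csa_sa: "c_sa_projection J P \<Longrightarrow> sa_projection P"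
  unfolding c_sa_projection_def sa_projection_def clinear_op_def cinner_def self_adjoint_def
  by (metis complex.inject)

theorem lemma9:
  shows "(\<forall>A :: 'a::{real_inner, complete_space} \<Rightarrow> 'a.
            positive_op A \<and> has_projection_decomposition A
            \<longrightarrow> sa_projection A \<or> onorm A > 1)
       \<and> (\<forall>(J :: 'b::{real_inner, complete_space} \<Rightarrow> 'b) A.
            complex_structure J \<and> c_positive_op J A \<and> c_has_projection_decomposition J A
            \<longrightarrow> c_sa_projection J A \<or> onorm A > 1)"
proof (intro conjI allI impI)
  fix A :: "'a \<Rightarrow> 'a"
  assume h: "positive_op A \<and> has_projection_decomposition A"
  show "sa_projection A \<or> onorm A > 1"
  proof (cases "onorm A > 1")
    case False
    obtain P where P: "\<forall>n. sa_projection (P n)" "\<forall>x. (\<lambda>n. P n x) sums (A x)"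
      using to_sums[where isP=sa_projection, OF _ zero_sa] h unfolding has_projection_decomposition_def by blast
    have bl: "bounded_linear A" using h unfolding positive_op_def by blast
    have "A \<circ> A = A \<and> self_adjoint A"
      using main[of P A] P bl False by simp
    thus ?thesis using bl unfolding sa_projection_def by blast
  qed simp
next
  fix J A :: "'b \<Rightarrow> 'b"
  assume h: "complex_structure J \<and> c_positive_op J A \<and> c_has_projection_decomposition J A"
  show "c_sa_projection J A \<or> onorm A > 1"
  proof (cases "onorm A > 1")
    case False
    obtain P where P: "\<forall>n. c_sa_projection J (P n)" "\<forall>x. (\<lambda>n. P n x) sums (A x)"
      using to_sums[where isP="c_sa_projection J", OF _ zero_csa] h complex_structure_def unfolding c_has_projection_decomposition_def by blast
    have cl: "clinear_op J A" using h unfolding c_positive_op_def by blast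
    hence bl: "bounded_linear A" unfolding clinear_op_def by blast
    have "A \<circ> A = A \<and> self_adjoint A"
      using main[of P A] P(2) bl False csa_sa[OF P(1)[rule_format]] by (simp add: not_less)
    moreover have "cinner J (A x) y = cinner J x (A y)" for x y
    proof -
      have "inner (A x) y = inner x (A y)" using calculation unfolding self_adjoint_def by blast
      moreover have "inner (A x) (J y) = inner x (J (A y))"
        using \<open>A \<circ> A = A \<and> self_adjoint A\<close> cl unfolding self_adjoint_def clinear_op_def by metis
      ultimately show ?thesis unfolding cinner_def by simp
    qed
    ultimately show ?thesis using cl unfolding c_sa_projection_def by blast
  qed simp
qed

end
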